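(* Let $n=em$ with $e,m\geq 1$ integers, and let $k$ be a positive integer. Let $\alpha,\beta\in\mathbb{T}_e^*$ with $\beta=\alpha^2$, and let $c_i\in\mathbb{Z}_2=\{0,1\}$ for $1\leq i\leq\lfloor\frac{m-1}{2}\rfloor$. Define the quaternary function $$Q(x)=\mathrm{Tr}_1^n\Big(\alpha x+2\sum_{i=1}^{\lfloor\frac{m-1}{2}\rfloor}c_i\,\beta\, x^{1+2^{eki}}\Big),\qquad x\in\mathbb{T}.$$ Then $Q$ is a quaternary bent function if and only if $\gcd(c(x^k),x^m-1)=1$ in $\mathbb{F}_2[x]$, where $$c(x)=1+\sum_{i=1}^{\lfloor\frac{m-1}{2}\rfloor}c_i\,(x^i+x^{m-i})\in\mathbb{F}_2[x].$$
   Context: $GR(4,n)$ denotes the Galois ring of characteristic 4 with $4^n$ elements, i.e. $GR(4,n)\cong\mathbb{Z}_4[\xi]$ where $\xi$ is a root of order $2^n-1$ of a monic degree-$n$ polynomial over $\mathbb{Z}_4$ whose reduction mod 2 is primitive over $\mathbb{F}_2$. Its Teichmüller set is $\mathbb{T}=\{0,1,\xi,\dots,\xi^{2^n-2}\}$, the set of roots of $x^{2^n}=x$ in $GR(4,n)$. Every $z\in GR(4,n)$ is uniquely $z=x+2y$ with $x,y\in\mathbb{T}$, and $\mathrm{Tr}_1^n(z)=\sum_{j=0}^{n-1}(x^{2^j}+y^{2^j})\in\mathbb{Z}_4$. $\mathbb{T}_e^*$ denotes the set of nonzero $x\in\mathbb{T}$ with $x^{2^e}=x$. Let $\mu:GR(4,n)\to\mathbb{F}_{2^n}$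 be reduction modulo 2; it restricts to a bijection $\mathbb{T}\to\mathbb{F}_{2^n}$, so any function $Q:\mathbb{T}\to\mathbb{Z}_4$ is viewed as the function $Q\circ\mu^{-1}:\mathbb{F}_{2^n}\to\mathbb{Z}_4$. A function $f:\mathbb{F}_{2^n}\to\mathbb{Z}_4$ is quaternary bent if $|\hat f(a)|=2^{n/2}$ for all $a\in\mathbb{F}_{2^n}$, where $\hat f(a)=\sum_{x\in\mathbb{F}_{2^n}} \mathrm{i}^{f(x)}(-1)^{\mathrm{tr}_1^n(ax)}$, $\mathrm{i}=\sqrt{-1}$, and $\mathrm{tr}_1^n(x)=\sum_{j=0}^{n-1}x^{2^j}$ is the absolute trace of $\mathbb{F}_{2^n}$. *)

theory Defs
  imports Complex_Main "HOL-Library.Z2" "HOL-Computational_Algebra.Polynomial"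
begin

(* GR(4,n), characterised up to isomorphism: a finite commutative ring of
   characteristic 4 with 4^n elements whose non-units are exactly the multiples
   of 2 (i.e. a finite local ring with maximal ideal 2R). *)
definition is_GR4 :: "nat \<Rightarrow> 'r::{comm_ring_1,finite} itself \<Rightarrow> bool" where
  "is_GR4 n _ \<longleftrightarrow> card (UNIV::'r set) = 4 ^ n \<and> (4::'r) = 0 \<and> (2::'r) \<noteq> 0 \<and>
     (\<forall>z::'r. (\<nexists>y. z = 2 * y) \<longrightarrow> (\<exists>w. z * w = 1))"

definition teich :: "nat \<Rightarrow> 'r::comm_ring_1 set" where
  "teich n = {x. x ^ (2 ^ n) = x}"

definition teich_star :: "nat \<Rightarrow> nat \<Rightarrow> 'r::comm_ring_1 set" where
  "teich_star n e = {x \<in> teich n. x \<noteq> 0 \<and> x ^ (2 ^ e) = x}"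

definition tx :: "nat \<Rightarrow> 'r::comm_ring_1 \<Rightarrow> 'r" where
  "tx n z = (THE x. x \<in> teich n \<and> (\<exists>y\<in>teich n. z = x + 2 * y))"

definition ty :: "nat \<Rightarrow> 'r::comm_ring_1 \<Rightarrow> 'r" where
  "ty n z = (THE y. y \<in> teich n \<and> z = tx n z + 2 * y)"

(* Trace Tr_1^n : GR(4,n) -> Z4 (as an element of the ring) *)
definition GTr :: "nat \<Rightarrow> 'r::comm_ring_1 \<Rightarrow> 'r" where
  "GTr n z = (\<Sum>j<n. tx n z ^ (2 ^ j) + 2 * ty n z ^ (2 ^ j))"

(* the element of Z4 = {0,1,2,3} represented by a ring element of the prime subring *)
definition z4_val :: "'r::comm_ring_1 \<Rightarrow> int" where
  "z4_val z = (THE k. k \<in> {0..3} \<and> of_int k = z)"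

definition ftr :: "nat \<Rightarrow> 'f::field \<Rightarrow> 'f" where
  "ftr n x = (\<Sum>j<n. x ^ (2 ^ j))"

definition walsh4 :: "nat \<Rightarrow> ('f::{field,finite} \<Rightarrow> int) \<Rightarrow> 'f \<Rightarrow> complex" where
  "walsh4 n f a = (\<Sum>x\<in>UNIV. \<i> ^ nat (f x mod 4) *
                       (if ftr n (a * x) = 0 then 1 else -1))"

definition quaternary_bent :: "nat \<Rightarrow> ('f::{field,finite} \<Rightarrow> int) \<Rightarrow> bool" where
  "quaternary_bent n f \<longleftrightarrow> (\<forall>a. cmod (walsh4 n f a) = 2 powr (real n / 2))"

definition cpoly :: "nat \<Rightarrow> (nat \<Rightarrow> bool) \<Rightarrow> bit poly" where
  "cpoly m c = 1 + (\<Sum>i\<in>{1..(m - 1) div 2}. if c i then monom 1 i + monom 1 (m - i) else 0)"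

definition Qfun :: "nat \<Rightarrow> nat \<Rightarrow> nat \<Rightarrow> nat \<Rightarrow> (nat \<Rightarrow> bool) \<Rightarrow> 'r::comm_ring_1 \<Rightarrow> 'r \<Rightarrow> 'r \<Rightarrow> int" where
  "Qfun n e m k c \<alpha> \<beta> x = z4_val (GTr n (\<alpha> * x + 2 *
      (\<Sum>i\<in>{1..(m - 1) div 2}. (if c i then 1 else 0) * \<beta> * x ^ (1 + 2 ^ (e * k * i)))))"

end

theory Submission
  imports Defs "HOL-Computational_Algebra.Computational_Algebra"
begin


lemma sq_sum_gen:
  fixes u :: "nat \<Rightarrow> 'a::comm_ring_1"
  shows "(\<Sum>j<n. u j)^2 = (\<Sum>j<n. (u j)^2) + 2 * (\<Sum>j<n. \<Sum>i<j. u i * u j)"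
proof (induction n)
  case 0 then show ?case by simp
next
  case (Suc n)
  have h: "(\<Sum>i<n. u i * u n) = (\<Sum>i<n. u i) * u n" by (simp add: sum_distrib_right)
  have "(\<Sum>j<Suc n. \<Sum>i<j. u i * u j) = (\<Sum>j<n. \<Sum>i<j. u i * u j) + (\<Sum>i<n. u i) * u n"
    unfolding h[symmetric] by simp
  moreover have "(\<Sum>j<Suc n. u j)^2 = (\<Sum>j<n. u j)^2 + 2 * ((\<Sum>i<n. u i) * u n) + (u n)^2"
    by (simp add: power2_eq_square algebra_simps)
  ultimately show ?case using Suc by (simp add: algebra_simps)
qed

lemma cross_sum_gen:
  fixes u v :: "nat \<Rightarrow> 'a::comm_ring_1"
  shows "(\<Sum>j<n. \<Sum>i<j. u i * v j + v i * u j) = (\<Sum>j<n. u j) * (\<Sum>j<n. v j) - (\<Sum>j<n. u j * v j)"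
proof (induction n)
  case 0 then show ?case by simp
next
  case (Suc n)
  have "(\<Sum>i<n. u i * v n + v i * u n) = (\<Sum>i<n. u i) * v n + (\<Sum>i<n. v i) * u n"
    by (simp add: sum.distrib sum_distrib_right)
  then show ?case using Suc by (simp add: algebra_simps)
qed

lemma telescope_aux:
  fixes u :: "nat \<Rightarrow> 'a::comm_ring_1"
  shows "(\<Sum>j<n. \<Sum>i<j. u (Suc i) * u (Suc j)) + u 0 * ((\<Sum>j<Suc n. u j) - u 0)
        = (\<Sum>j<Suc n. \<Sum>i<j. u i * u j)"
proof (induction n)
  case 0 then show ?case by simp
next
  case (Suc n)
  have s1: "(\<Sum>i<n. u (Suc i)) = (\<Sum>j<Suc n. u j) - u 0"
    using sum.lessThan_Suc_shift[of u "Suc n"] by simp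
  have h2: "(\<Sum>i<n. u (Suc i) * u (Suc n)) = u (Suc n) * (\<Sum>i<n. u (Suc i))"
    by (simp add: sum_distrib_left mult.commute)
  have f1: "(\<Sum>j<Suc n. \<Sum>i<j. u (Suc i) * u (Suc j)) = (\<Sum>j<n. \<Sum>i<j. u (Suc i) * u (Suc j))
      + u (Suc n) * ((\<Sum>j<Suc n. u j) - u 0)"
    unfolding s1[symmetric] h2[symmetric] by simp
  have f2: "(\<Sum>j<Suc (Suc n). \<Sum>i<j. u i * u j) = (\<Sum>j<Suc n. \<Sum>i<j. u i * u j)
      + u (Suc n) * (\<Sum>j<Suc n. u j)"
    by (subst sum.lessThan_Suc, subst sum_distrib_left, simp add: mult.commute)
  have f3: "(\<Sum>j<Suc (Suc n). u j) = (\<Sum>j<Suc n. u j) + u (Suc n)" by simp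
  have alg: "\<And>A' a x t z B b :: 'a. A' = a + x*(t - z) \<Longrightarrow> B = b + x*t \<Longrightarrow> a + z*(t - z) = b
     \<Longrightarrow> A' + z*((t + x) - z) = B"
  proof -
    fix A' a x t z B b :: 'a
    assume h1: "A' = a + x*(t - z)" and h2: "B = b + x*t" and h3: "a + z*(t - z) = b"
    have "A' + z*((t + x) - z) = (a + z*(t - z)) + x*t" using h1 by (simp add: algebra_simps)
    then show "A' + z*((t + x) - z) = B" using h2 h3 by simp
  qed
  show ?case unfolding f3 by (rule alg[OF f1 f2 Suc.IH])
qed

lemma telescope:
  fixes u :: "nat \<Rightarrow> 'a::comm_ring_1"
  assumes "u n = u 0"
  shows "(\<Sum>j<n. \<Sum>i<j. u (Suc i) * u (Suc j)) = (\<Sum>j<n. \<Sum>i<j. u i * u j)"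
proof -
  have "(\<Sum>j<Suc n. \<Sum>i<j. u i * u j) = (\<Sum>j<n. \<Sum>i<j. u i * u j) + u n * (\<Sum>j<n. u j)"
    by (simp add: sum_distrib_left mult.commute)
  then show ?thesis using telescope_aux[of u n] assms by (simp add: algebra_simps)
qed

lemma shift_sum:
  fixes u :: "nat \<Rightarrow> 'a::comm_ring_1"
  assumes "u n = u 0"
  shows "(\<Sum>j<n. u (Suc j)) = (\<Sum>j<n. u j)"
proof -
  have "(\<Sum>j<Suc n. u j) = u 0 + (\<Sum>j<n. u (Suc j))" by (rule sum.lessThan_Suc_shift)
  moreover have "(\<Sum>j<Suc n. u j) = (\<Sum>j<n. u j) + u n" by simp
  ultimately show ?thesis using assms by (simp add: algebra_simps)
qed

definition e2f :: "nat \<Rightarrow> 'f::field \<Rightarrow> 'f" where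
  "e2f n y = (\<Sum>j<n. \<Sum>i<j. y^(2^i) * y^(2^j))"

definition sgc :: "'f::field \<Rightarrow> complex" where
  "sgc y = (if y = 0 then 1 else -1)"

definition gq :: "nat \<Rightarrow> 'f::field \<Rightarrow> complex" where
  "gq n y = (if ftr n y = 0 then 1 else \<i>) * sgc (e2f n y)"

lemma char2_neg: assumes "(2::'a::comm_ring_1) = 0" shows "- (x::'a) = x"
proof -
  have "x + x = 2 * x" by simp
  then have "x + x = 0" using assms by simp
  then show ?thesis by (simp add: add_eq_0_iff2)
qed

lemma char2_minus: assumes "(2::'a::comm_ring_1) = 0" shows "(x::'a) - y = x + y"
  using char2_neg[OF assms, of y] by (metis diff_minus_eq_add)

lemma frob2: assumes "(2::'a::comm_ring_1) = 0" shows "((x::'a) + y)^2 = x^2 + y^2"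
proof -
  have "(x + y)^2 = x^2 + y^2 + 2 * x * y" by (simp add: power2_eq_square algebra_simps)
  then show ?thesis using assms by simp
qed

lemma frobj: assumes "(2::'a::comm_ring_1) = 0" shows "((x::'a) + y)^(2^j) = x^(2^j) + y^(2^j)"
proof (induction j)
  case 0 then show ?case by simp
next
  case (Suc j)
  have "(x + y)^(2^Suc j) = ((x + y)^(2^j))^2" by (simp add: power_mult[symmetric] mult.commute)
  also have "\<dots> = (x^(2^j))^2 + (y^(2^j))^2" using Suc frob2[OF assms] by simp
  also have "\<dots> = x^(2^Suc j) + y^(2^Suc j)" by (simp add: power_mult[symmetric] mult.commute)
  finally show ?case .
qed

lemma frob_sum: assumes "(2::'a::comm_ring_1) = 0"
  shows "(\<Sum>i\<in>A. (f i::'a))^(2^j) = (\<Sum>i\<in>A. (f i)^(2^j))"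
proof (induction A rule: infinite_finite_induct)
  case (infinite A) then have "(0::'a)^(2^j) = 0" by (intro zero_power) simp
  then show ?case using infinite by simp
next
  case empty have "(0::'a)^(2^j) = 0" by (intro zero_power) simp
  then show ?case by simp
next
  case (insert x F) then show ?case by (simp add: frobj[OF assms])
qed

lemma sq_sum_char2: assumes "(2::'a::comm_ring_1) = 0"
  shows "(\<Sum>i\<in>A. (f i::'a))^2 = (\<Sum>i\<in>A. (f i)^2)"
  using frob_sum[OF assms, of f A 1] by simp

lemma pow2_period: assumes "(y::'a::comm_ring_1)^(2^n) = y"
  shows "y^(2^(n*q + r)) = y^(2^r)"
proof (induction q)
  case 0 then show ?case by simp
next
  case (Suc q)
  have "y^(2^(n*Suc q + r)) = (y^(2^n))^(2^(n*q+r))"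
    by (simp add: power_mult[symmetric] power_add[symmetric] algebra_simps)
  then show ?case using Suc assms by simp
qed

lemma pow2_mod: assumes "(y::'a::comm_ring_1)^(2^n) = y"
  shows "y^(2^a) = y^(2^(a mod n))"
  using pow2_period[OF assms, of "a div n" "a mod n"] by simp

lemma pow2_cong: assumes "(y::'a::comm_ring_1)^(2^n) = y" "a mod n = b mod n"
  shows "y^(2^a) = y^(2^b)"
  using pow2_mod[OF assms(1), of a] pow2_mod[OF assms(1), of b] assms(2) by simp

lemma tr_frob: assumes "(y::'f::field)^(2^n) = y"
  shows "ftr n (y^2) = ftr n y"
proof -
  have "ftr n (y^2) = (\<Sum>j<n. y^(2^Suc j))" unfolding ftr_def
    by (simp add: power_mult[symmetric] mult.commute)
  also have "\<dots> = (\<Sum>j<n. y^(2^j))"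
    using shift_sum[of "\<lambda>j. y^(2^j)" n] assms by simp
  finally show ?thesis unfolding ftr_def .
qed

lemma tr_pow: assumes "(y::'f::field)^(2^n) = y" "\<And>z::'f. z^(2^n) = z"
  shows "ftr n (y^(2^r)) = ftr n y"
proof (induction r)
  case 0 then show ?case by simp
next
  case (Suc r)
  have "y^(2^Suc r) = (y^(2^r))^2" by (simp add: power_mult[symmetric] mult.commute)
  then show ?case using tr_frob[OF assms(2)] Suc by simp
qed

lemma tr_sq: assumes "(2::'f::field) = 0" "(y::'f)^(2^n) = y"
  shows "(ftr n y)^2 = ftr n y"
proof -
  have "(ftr n y)^2 = (\<Sum>j<n. (y^(2^j))^2)" unfolding ftr_def
    using frob_sum[OF assms(1), of "\<lambda>j. y^(2^j)" "{..<n}" 1] by simp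
  also have "\<dots> = ftr n (y^2)" unfolding ftr_def
    by (simp add: power_mult[symmetric] mult.commute)
  finally show ?thesis using tr_frob[OF assms(2)] by simp
qed

lemma sq01: assumes "(t::'f::field)^2 = t" shows "t = 0 \<or> t = 1"
proof -
  have "t * (t - 1) = 0" using assms by (simp add: power2_eq_square algebra_simps)
  then show ?thesis by simp
qed

lemma tr_add: assumes "(2::'f::field) = 0"
  shows "ftr n (x + y) = ftr n x + ftr n (y::'f)"
  unfolding ftr_def by (simp add: frobj[OF assms] sum.distrib)

lemma e2_sq: assumes "(2::'f::field) = 0" "(y::'f)^(2^n) = y"
  shows "(e2f n y)^2 = e2f n y"
proof -
  have "(e2f n y)^2 = (\<Sum>j<n. \<Sum>i<j. (y^(2^i) * y^(2^j))^2)" unfolding e2f_def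
    by (simp add: sq_sum_char2[OF assms(1)])
  also have "\<dots> = (\<Sum>j<n. \<Sum>i<j. y^(2^Suc i) * y^(2^Suc j))"
    by (simp add: power_mult_distrib power_mult[symmetric] mult.commute)
  also have "\<dots> = e2f n y" unfolding e2f_def
    using telescope[of "\<lambda>j. y^(2^j)" n] assms(2) by simp
  finally show ?thesis .
qed

lemma e2_add: assumes "(2::'f::field) = 0"
  shows "e2f n (x + y) = e2f n x + e2f n y + ftr n x * ftr n y + ftr n (x * (y::'f))"
proof -
  have "e2f n (x + y) = (\<Sum>j<n. \<Sum>i<j. (x^(2^i) * x^(2^j) + y^(2^i) * y^(2^j))
         + (x^(2^i) * y^(2^j) + y^(2^i) * x^(2^j)))"
    unfolding e2f_def frobj[OF assms] by (simp add: algebra_simps)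
  also have "\<dots> = e2f n x + e2f n y + (\<Sum>j<n. \<Sum>i<j. x^(2^i) * y^(2^j) + y^(2^i) * x^(2^j))"
    unfolding e2f_def by (simp add: sum.distrib)
  also have "(\<Sum>j<n. \<Sum>i<j. x^(2^i) * y^(2^j) + y^(2^i) * x^(2^j)) = ftr n x * ftr n y - ftr n (x*y)"
    unfolding ftr_def using cross_sum_gen[of "\<lambda>j. x^(2^j)" "\<lambda>j. y^(2^j)" n]
    by (simp add: power_mult_distrib)
  finally show ?thesis using char2_minus[OF assms] by (simp add: algebra_simps)
qed

lemma sgc_add: assumes "(2::'f::field) = 0" "(a::'f)^2 = a" "b^2 = b"
  shows "sgc (a + b) = sgc a * sgc b"
proof -
  have "(1::'f) + 1 = 0" using assms(1) by simp
  then show ?thesis using sq01[OF assms(2)] sq01[OF assms(3)] unfolding sgc_def by auto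
qed

lemma sgc_sq: "sgc y * sgc y = 1" unfolding sgc_def by auto

lemma idem_add: assumes "(2::'f::field) = 0" "(x::'f)^2 = x" "y^2 = y" shows "(x+y)^2 = x+y"
  using frob2[OF assms(1)] assms by simp

lemma gq_add: assumes two: "(2::'f::field) = 0" and fr: "\<And>z::'f. z^(2^n) = z"
  shows "gq n (u + v) = gq n u * gq n v * sgc (ftr n (u * (v::'f)))"
proof -
  note t01 = tr_sq[OF two fr]
  define a where "a = e2f n u"
  define b where "b = e2f n v"
  define p where "p = ftr n u * ftr n v"
  define q where "q = ftr n (u*v)"
  have ia: "a^2 = a" "b^2 = b" unfolding a_def b_def using e2_sq[OF two fr] by auto
  have ip: "p^2 = p" unfolding p_def using t01[of u] t01[of v] by (simp add: power_mult_distrib)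
  have iq: "q^2 = q" unfolding q_def using t01 by simp
  have iab: "(a+b)^2 = a+b" using idem_add[OF two ia] .
  have iabp: "(a+b+p)^2 = a+b+p" using idem_add[OF two iab ip] .
  have e: "sgc (e2f n (u+v)) = sgc a * sgc b * sgc p * sgc q"
    unfolding e2_add[OF two] a_def[symmetric] b_def[symmetric] p_def[symmetric] q_def[symmetric]
    using sgc_add[OF two iabp iq] sgc_add[OF two iab ip] sgc_add[OF two ia] by simp
  have one: "(1::'f) + 1 = 0" using two by simp
  have "ftr n u = 0 \<or> ftr n u = 1" "ftr n v = 0 \<or> ftr n v = 1" using sq01 t01 by auto
  then show ?thesis unfolding gq_def e tr_add[OF two] a_def b_def p_def q_def
    using one by (elim disjE) (simp_all add: sgc_def)
qed

lemma fermat_ff: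
  fixes y :: "'f::{field,finite}"
  shows "y ^ card (UNIV::'f set) = y"
proof (cases "y = 0")
  case True then show ?thesis by (simp add: zero_power finite_UNIV_card_ge_0)
next
  case False
  define U where "U = UNIV - {0::'f}"
  have fin: "finite U" unfolding U_def by simp
  have bij: "bij_betw (\<lambda>x. y * x) U U"
    by (rule bij_betwI[where g="\<lambda>x. x / y"]) (use False in \<open>auto simp: U_def\<close>)
  have "(\<Prod>x\<in>U. y * x) = (\<Prod>x\<in>U. x)"
    using prod.reindex_bij_betw[OF bij, of "\<lambda>x. x"] by simp
  moreover have "(\<Prod>x\<in>U. y * x) = y ^ card U * (\<Prod>x\<in>U. x)"
    by (simp add: prod.distrib)
  moreover have "(\<Prod>x\<in>U. x) \<noteq> 0" using fin by (simp add: U_def)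
  ultimately have "y ^ card U = 1" by simp
  moreover have "card (UNIV::'f set) = Suc (card U)"
  proof -
    have "card (UNIV::'f set) > 0" by (simp add: finite_UNIV_card_ge_0)
    then show ?thesis unfolding U_def by (simp add: card_Diff_singleton)
  qed
  ultimately show ?thesis by simp
qed

lemma nonroot:
  fixes A :: "nat \<Rightarrow> 'f::{field,finite}"
  assumes "A d \<noteq> 0" "e \<ge> 1" "2^(e*d) < card (UNIV::'f set)"
  shows "\<exists>z. (\<Sum>j\<le>d. A j * z^(2^(e*j))) \<noteq> 0"
proof (rule ccontr)
  assume H: "\<not> ?thesis"
  define p where "p = (\<Sum>j\<le>d. monom (A j) (2^(e*j)))"
  have ev: "poly p z = (\<Sum>j\<le>d. A j * z^(2^(e*j)))" for z
    unfolding p_def by (simp add: poly_sum poly_monom)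
  have inj: "2^(e*j) = (2::nat)^(e*d) \<longleftrightarrow> j = d" for j
    using assms(2) by simp
  have "coeff p (2^(e*d)) = (\<Sum>j\<le>d. if 2^(e*j) = (2::nat)^(e*d) then A j else 0)"
    unfolding p_def coeff_sum by simp
  also have "\<dots> = A d" unfolding inj by simp
  finally have "p \<noteq> 0" using assms(1) by auto
  have deg: "degree p \<le> 2^(e*d)" unfolding p_def
  proof (rule degree_sum_le)
    fix j assume "j \<in> {..d}"
    then have "(2::nat)^(e*j) \<le> 2^(e*d)" by (intro power_increasing) auto
    then show "degree (monom (A j) (2^(e*j))) \<le> 2^(e*d)" using degree_monom_le order_trans by blast
  qed simp
  have "{x. poly p x = 0} = UNIV" using H ev by auto
  then have "card (UNIV::'f set) \<le> degree p" using card_poly_roots_bound[OF \<open>p \<noteq> 0\<close>] by simp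
  then show False using deg assms(3) by simp
qed

lemma sum_shift_UNIV:
  fixes g :: "'a::{ab_group_add,finite} \<Rightarrow> 'b::comm_monoid_add"
  shows "(\<Sum>x\<in>UNIV. g (x + a)) = (\<Sum>x\<in>UNIV. g x)"
proof -
  have "bij_betw (\<lambda>x. x + a) UNIV UNIV"
    by (rule bij_betwI[where g="\<lambda>x. x - a"]) auto
  then show ?thesis using sum.reindex_bij_betw by blast
qed

lemma tr_zero: "ftr n (0::'f::field) = 0"
proof -
  have z: "(0::'f)^(2^j) = 0" for j by (intro zero_power) simp
  show ?thesis unfolding ftr_def by (simp only: z sum.neutral_const)
qed

lemma tr_nonzero:
  assumes "card (UNIV::'f::{field,finite} set) = 2^n" "n \<ge> 1"
  shows "\<exists>y::'f. ftr n y \<noteq> 0"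
proof -
  obtain z::'f where "(\<Sum>j\<le>n-1. 1 * z^(2^(1*j))) \<noteq> 0"
    using nonroot[of "\<lambda>j. 1::'f" "n-1" 1] assms by fastforce
  moreover have "{..n-1} = {..<n}" using assms(2) by auto
  ultimately show ?thesis unfolding ftr_def by auto
qed

lemma charsum:
  assumes two: "(2::'f::{field,finite}) = 0" and fr: "\<And>z::'f. z^(2^n) = z"
    and card: "card (UNIV::'f set) = 2^n" and n: "n \<ge> 1"
  shows "(\<Sum>x\<in>UNIV. sgc (ftr n (x * w))) = (if w = (0::'f) then 2^n else 0)"
proof (cases "w = 0")
  case True then show ?thesis using card by (simp add: tr_zero sgc_def)
next
  case False
  obtain y0::'f where y0: "ftr n y0 \<noteq> 0" using tr_nonzero[OF card n] by blast
  define x0 where "x0 = y0 / w"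
  have "ftr n (x0 * w) = 1" using y0 False sq01[OF tr_sq[OF two fr]] unfolding x0_def by auto
  define S where "S = (\<Sum>x\<in>UNIV. sgc (ftr n (x * w)))"
  have "S = (\<Sum>x\<in>UNIV. sgc (ftr n ((x + x0) * w)))"
    unfolding S_def using sum_shift_UNIV[of "\<lambda>x. sgc (ftr n (x * w))" x0] by simp
  also have "\<dots> = (\<Sum>x\<in>UNIV. - sgc (ftr n (x * w)))"
  proof (rule sum.cong)
    fix x
    have "sgc (ftr n ((x + x0) * w)) = sgc (ftr n (x * w) + ftr n (x0 * w))"
      by (simp add: distrib_right tr_add[OF two])
    also have "\<dots> = sgc (ftr n (x * w)) * sgc (ftr n (x0 * w))"
      by (rule sgc_add[OF two tr_sq[OF two fr] tr_sq[OF two fr]])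
    finally show "sgc (ftr n ((x + x0) * w)) = - sgc (ftr n (x * w))"
      using \<open>ftr n (x0 * w) = 1\<close> by (simp add: sgc_def)
  qed simp
  also have "\<dots> = - S" unfolding S_def by (simp add: sum_negf)
  finally have "S = 0" by simp
  then show ?thesis using False unfolding S_def by simp
qed

lemma sgc_tr_add:
  assumes two: "(2::'f::field) = 0" and fr: "\<And>z::'f. z^(2^n) = z"
  shows "sgc (ftr n (x + y)) = sgc (ftr n x) * sgc (ftr n (y::'f))"
  unfolding tr_add[OF two] by (rule sgc_add[OF two tr_sq[OF two fr] tr_sq[OF two fr]])

lemma walsh_sq:
  fixes Fv :: "'f::{field,finite} \<Rightarrow> complex" and D :: "'f \<Rightarrow> 'f"
  assumes two: "(2::'f) = 0" and fr: "\<And>z::'f. z^(2^n) = z"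
    and card: "card (UNIV::'f set) = 2^n" and n: "n \<ge> 1"
    and Fadd: "\<And>x z. Fv (x + z) = Fv x * Fv z * sgc (ftr n (x * D z))"
    and Fnorm: "\<And>x. cnj (Fv x) * Fv x = 1"
  shows "cnj (\<Sum>x\<in>UNIV. Fv x * sgc (ftr n (a*x))) * (\<Sum>x\<in>UNIV. Fv x * sgc (ftr n (a*x)))
     = 2^n * (\<Sum>z\<in>{z. D z = 0}. Fv z * sgc (ftr n (a*z)))"
proof -
  define G where "G x = Fv x * sgc (ftr n (a*x))" for x
  have cs: "cnj (sgc y) = sgc y" for y::'f unfolding sgc_def by simp
  have "cnj (\<Sum>x\<in>UNIV. G x) * (\<Sum>y\<in>UNIV. G y) = (\<Sum>x\<in>UNIV. \<Sum>y\<in>UNIV. cnj (G x) * G y)"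
    by (simp add: sum_product)
  also have "\<dots> = (\<Sum>x\<in>UNIV. \<Sum>z\<in>UNIV. cnj (G x) * G (z + x))"
    by (rule sum.cong[OF refl]) (rule sum_shift_UNIV[symmetric])
  also have "\<dots> = (\<Sum>x\<in>UNIV. \<Sum>z\<in>UNIV. Fv z * sgc (ftr n (a*z)) * sgc (ftr n (x * D z)))"
  proof (intro sum.cong refl)
    fix x z
    have "cnj (G x) * G (z + x) = (cnj (Fv x) * Fv x) * Fv z * sgc (ftr n (x * D z))
          * (sgc (ftr n (a*x)) * sgc (ftr n (a*x))) * sgc (ftr n (a*z))"
      unfolding G_def using Fadd[of x z] sgc_tr_add[OF two fr, of "a*z" "a*x"]
      by (simp add: cs add.commute distrib_left)
    then show "cnj (G x) * G (z + x) = Fv z * sgc (ftr n (a*z)) * sgc (ftr n (x * D z))"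
      using Fnorm[of x] sgc_sq[of "ftr n (a*x)"] by simp
  qed
  also have "\<dots> = (\<Sum>z\<in>UNIV. Fv z * sgc (ftr n (a*z)) * (\<Sum>x\<in>UNIV. sgc (ftr n (x * D z))))"
    by (subst sum.swap) (simp add: sum_distrib_left)
  also have "\<dots> = (\<Sum>z\<in>UNIV. if D z = 0 then 2^n * (Fv z * sgc (ftr n (a*z))) else 0)"
    by (rule sum.cong[OF refl]) (simp add: charsum[OF two fr card n])
  also have "\<dots> = (\<Sum>z\<in>{z. D z = 0}. 2^n * (Fv z * sgc (ftr n (a*z))))"
    by (simp add: sum.inter_filter[symmetric])
  also have "\<dots> = 2^n * (\<Sum>z\<in>{z. D z = 0}. Fv z * sgc (ftr n (a*z)))"
    by (simp add: sum_distrib_left)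
  finally show ?thesis unfolding G_def .
qed

lemma cmod_bent_iff: "cmod (w::complex) = 2 powr (real n / 2) \<longleftrightarrow> cnj w * w = 2^n"
proof -
  have p: "2 powr (real n / 2) = sqrt (2^n)"
    by (simp add: powr_half_sqrt_powr powr_realpow)
  have "cmod w = sqrt (2^n) \<longleftrightarrow> (cmod w)^2 = 2^n"
    using real_sqrt_unique[of "cmod w" "2^n"] by auto
  also have "\<dots> \<longleftrightarrow> complex_of_real ((cmod w)^2) = complex_of_real (2^n)"
    by (simp only: of_real_eq_iff)
  also have "\<dots> \<longleftrightarrow> cnj w * w = 2^n"
    unfolding complex_norm_square by (simp add: mult.commute)
  finally show ?thesis unfolding p .
qed

lemma bent_iff_F:
  fixes Fv :: "'f::{field,finite} \<Rightarrow> complex" and D :: "'f \<Rightarrow> 'f"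
  assumes two: "(2::'f) = 0" and fr: "\<And>z::'f. z^(2^n) = z"
    and card: "card (UNIV::'f set) = 2^n" and n: "n \<ge> 1"
    and Fadd: "\<And>x z. Fv (x + z) = Fv x * Fv z * sgc (ftr n (x * D z))"
    and Fnorm: "\<And>x. cnj (Fv x) * Fv x = 1"
    and F0: "Fv 0 = 1" and Dadd: "\<And>x y. D (x + y) = D x + D y"
  shows "(\<forall>a. cmod (\<Sum>x\<in>UNIV. Fv x * sgc (ftr n (a*x))) = 2 powr (real n / 2))
          \<longleftrightarrow> (\<forall>z. D z = 0 \<longrightarrow> z = 0)"
proof
  assume B: "\<forall>a. cmod (\<Sum>x\<in>UNIV. Fv x * sgc (ftr n (a*x))) = 2 powr (real n / 2)"
  show "\<forall>z. D z = 0 \<longrightarrow> z = 0"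
  proof (rule ccontr)
    assume "\<not> (\<forall>z. D z = 0 \<longrightarrow> z = 0)"
    then obtain z0 where z0: "D z0 = 0" "z0 \<noteq> 0" by blast
    define K where "K = {z. D z = 0}"
    have D0: "D 0 = 0" using Dadd[of 0 0] by (metis add_0 add_left_cancel add_0_right)
    have s1: "sgc (ftr n (0 * z)) = 1" for z :: 'f by (simp add: tr_zero sgc_def)
    have "cnj (\<Sum>x\<in>UNIV. Fv x * sgc (ftr n (0*x))) * (\<Sum>x\<in>UNIV. Fv x * sgc (ftr n (0*x)))
       = 2^n * (\<Sum>z\<in>K. Fv z)"
      using walsh_sq[OF two fr card n Fadd Fnorm, of 0] unfolding K_def s1 by simp
    moreover have "cnj (\<Sum>x\<in>UNIV. Fv x * sgc (ftr n (0*x))) * (\<Sum>x\<in>UNIV. Fv x * sgc (ftr n (0*x))) = 2^n"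
      using B cmod_bent_iff by blast
    ultimately have S1: "(\<Sum>z\<in>K. Fv z) = 1" by simp
    have finK: "finite K" by simp
    have cc: "(x::'f) + x = 0" for x using two by (metis mult_2 mult_zero_left)
    show False
    proof (cases "\<exists>z1\<in>K. Fv z1 \<noteq> 1")
      case True
      then obtain z1 where z1: "z1 \<in> K" "Fv z1 \<noteq> 1" by blast
      have Dz1: "D z1 = 0" using z1 K_def by simp
      have "Fv 0 = Fv z1 * Fv z1" using Fadd[of z1 z1] cc[of z1] Dz1 by (simp add: tr_zero sgc_def)
      then have "(Fv z1 - 1) * (Fv z1 + 1) = 0" using F0 by (simp add: algebra_simps)
      then have m1: "Fv z1 = -1" using z1(2) by (simp add: add_eq_0_iff2)
      have bij: "bij_betw (\<lambda>z. z + z1) K K"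
        by (rule bij_betwI[where g="\<lambda>z. z + z1"])
           (auto simp: K_def Dadd Dz1 add.assoc cc)
      have "(\<Sum>z\<in>K. Fv z) = (\<Sum>z\<in>K. Fv (z + z1))"
        using sum.reindex_bij_betw[OF bij, of Fv] by simp
      also have "\<dots> = (\<Sum>z\<in>K. - Fv z)"
        by (rule sum.cong[OF refl]) (simp add: Fadd Dz1 m1 tr_zero sgc_def)
      finally have "(\<Sum>z\<in>K. Fv z) = 0" by (simp add: sum_negf)
      then show False using S1 by simp
    next
      case False
      then have "(\<Sum>z\<in>K. Fv z) = of_nat (card K)" by simp
      moreover have "card {0, z0} \<le> card K"
        by (rule card_mono[OF finK]) (auto simp: K_def D0 z0)
      ultimately show False using S1 z0(2) by simp
    qed
  qed
next
  assume I: "\<forall>z. D z = 0 \<longrightarrow> z = 0"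
  have D0: "D 0 = 0" using Dadd[of 0 0] by (metis add_0 add_left_cancel add_0_right)
  have K: "{z. D z = 0} = {0::'f}"
    using I D0 by auto
  show "\<forall>a. cmod (\<Sum>x\<in>UNIV. Fv x * sgc (ftr n (a*x))) = 2 powr (real n / 2)"
  proof
    fix a
    show "cmod (\<Sum>x\<in>UNIV. Fv x * sgc (ftr n (a*x))) = 2 powr (real n / 2)"
      unfolding cmod_bent_iff walsh_sq[OF two fr card n Fadd Fnorm] K
      by (simp add: F0 tr_zero sgc_def)
  qed
qed



definition evp :: "nat \<Rightarrow> bit poly \<Rightarrow> 'f::field \<Rightarrow> 'f" where
  "evp e p z = (\<Sum>j\<le>degree p. (if coeff p j = 0 then 0 else z^(2^(e*j))))"

lemma bit01: "(b::bit) = 0 \<or> b = 1" by auto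

lemma evp_bound: assumes "degree p \<le> N"
  shows "evp e p z = (\<Sum>j\<le>N. (if coeff p j = 0 then 0 else z^(2^(e*j))))"
  unfolding evp_def
  by (rule sum.mono_neutral_left) (use assms in \<open>auto intro: le_degree\<close>)

lemma evp_add: assumes two: "(2::'f::field) = 0"
  shows "evp e (p + q) (z::'f) = evp e p z + evp e q z"
proof -
  define N where "N = max (degree p) (degree q)"
  have N: "degree p \<le> N" "degree q \<le> N" "degree (p + q) \<le> N"
    unfolding N_def by (auto intro: degree_add_le)
  have zz: "w + w = (0::'f)" for w using two by (metis mult_2 mult_zero_left)
  have "(if coeff p j + coeff q j = 0 then 0 else w) =
        (if coeff p j = 0 then 0 else w) + (if coeff q j = 0 then 0 else (w::'f))" for j w
    using bit01[of "coeff p j"] bit01[of "coeff q j"] zz[of w] by auto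
  then show ?thesis
    unfolding evp_bound[OF N(1)] evp_bound[OF N(2)] evp_bound[OF N(3)]
    by (simp add: sum.distrib)
qed

lemma evp_0 [simp]: "evp e 0 z = 0" unfolding evp_def by simp

lemma evp_sum: assumes two: "(2::'f::field) = 0"
  shows "evp e (\<Sum>i\<in>A. p i) (z::'f) = (\<Sum>i\<in>A. evp e (p i) z)"
  by (induction A rule: infinite_finite_induct) (simp_all add: evp_add[OF two])

lemma evp_frob: assumes two: "(2::'f::field) = 0"
  shows "evp e p ((z::'f)^(2^e)) = (evp e p z)^(2^e)"
  unfolding evp_def frob_sum[OF two]
  by (rule sum.cong[OF refl]) (simp add: power_mult[symmetric] power_add[symmetric] mult.commute
      power_0_left)

lemma evp_arg0: "evp e p (0::'f::field) = 0"
proof -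
  have z: "(0::'f)^(2^j) = 0" for j by (intro zero_power) simp
  show ?thesis unfolding evp_def by (simp only: z if_cancel sum.neutral_const)
qed

lemma evp_additive: assumes two: "(2::'f::field) = 0"
  shows "evp e p ((x::'f) + y) = evp e p x + evp e p y"
proof -
  have "(if P then 0 else a + b) = (if P then 0 else a) + (if P then 0 else (b::'f))" for P a b by simp
  then show ?thesis unfolding evp_def frobj[OF two] by (simp add: sum.distrib)
qed

lemma evp_pCons: "evp e (pCons a p) (z::'f::field) = (if a = 0 then 0 else z) + evp e p (z^(2^e))"
proof -
  have d: "degree (pCons a p) \<le> Suc (degree p)" by (simp add: degree_pCons_le)
  have "evp e (pCons a p) z = (\<Sum>j\<le>Suc (degree p). (if coeff (pCons a p) j = 0 then 0 else z^(2^(e*j))))"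
    by (rule evp_bound[OF d])
  also have "\<dots> = (if a = 0 then 0 else z) +
     (\<Sum>j\<le>degree p. (if coeff p j = 0 then 0 else z^(2^(e*Suc j))))"
    by (subst sum.atMost_Suc_shift) simp
  also have "(\<Sum>j\<le>degree p. (if coeff p j = 0 then 0 else z^(2^(e*Suc j)))) = evp e p (z^(2^e))"
    unfolding evp_def
    by (rule sum.cong[OF refl]) (simp add: power_mult[symmetric] power_add[symmetric] mult.commute)
  finally show ?thesis .
qed

lemma evp_smult: "evp e (smult a q) z = (if a = 0 then 0 else evp e q z)"
  using bit01[of a] by auto

lemma evp_mult: assumes two: "(2::'f::field) = 0"
  shows "evp e (p * q) (z::'f) = evp e p (evp e q z)"
proof (induction p rule: pCons_induct)
  case 0 then show ?case by simp
next
  case (pCons a p)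
  have "evp e (pCons a p * q) z = evp e (smult a q) z + evp e (pCons 0 (p * q)) z"
    by (simp add: evp_add[OF two])
  also have "\<dots> = (if a = 0 then 0 else evp e q z) + evp e (p * q) (z^(2^e))"
    by (simp add: evp_smult evp_pCons)
  also have "evp e (p * q) (z^(2^e)) = (evp e p (evp e q z))^(2^e)"
    by (simp add: evp_frob[OF two] pCons.IH)
  finally show ?case by (simp add: evp_pCons evp_frob[OF two])
qed

lemma evp_monom1: "evp e (monom 1 j) (z::'f::field) = z^(2^(e*j))"
proof -
  have "(if (if j = i then (1::bit) else 0) = 0 then 0 else w) = (if i = j then w else 0)" for i and w::'f
    by auto
  then show ?thesis unfolding evp_def by (simp add: degree_monom_eq coeff_monom)
qed

lemma evp_pc1: "evp e [:1:] z = z" unfolding evp_def by simp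

lemma evp_const1: "evp e 1 z = z"
  unfolding evp_def by simp

lemma pcompose_monom1: "pcompose (monom (1::'a::comm_ring_1) i) q = q ^ i"
proof (induction i)
  case 0 then show ?case by (simp add: monom_0 pcompose_1 one_pCons[symmetric])
next
  case (Suc i)
  have "monom (1::'a) (Suc i) = [:0,1:] * monom 1 i" by (simp add: monom_Suc)
  then show ?case using Suc by (simp add: pcompose_mult pcompose_pCons)
qed

lemma bit_neg1: "(-1::bit) = 1" by (simp add: uminus_bit_def)

lemma degM: assumes "m \<ge> 1" shows "degree ([:-1:] + monom (1::bit) m) = m"
proof -
  have "degree [:-1::bit:] < degree (monom (1::bit) m)" using assms by (simp add: degree_monom_eq)
  then show ?thesis by (simp add: degree_add_eq_right degree_monom_eq)
qed

lemma evp_M: assumes two: "(2::'f::field) = 0" and fr: "(z::'f)^(2^(e*m)) = z"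
  shows "evp e ([:-1:] + monom 1 m) z = 0"
proof -
  have "[:-1::bit:] = 1" by (simp add: bit_neg1 one_pCons)
  then have "evp e ([:-1:] + monom 1 m) z = z + z^(2^(e*m))"
    by (simp add: evp_add[OF two] evp_const1 evp_monom1 evp_pc1)
  also have "\<dots> = 0" using fr two by (metis mult_2 mult_zero_left)
  finally show ?thesis .
qed

lemma inj_iff_coprime:
  fixes P :: "bit poly"
  assumes two: "(2::'f::{field,finite}) = 0" and fr: "\<And>z::'f. z^(2^n) = z"
    and card: "card (UNIV::'f set) = 2^n" and nem: "n = e*m" and e: "e \<ge> 1" and m: "m \<ge> 1"
  shows "(\<forall>z::'f. evp e P z = 0 \<longrightarrow> z = 0) \<longleftrightarrow> coprime P ([:-1:] + monom 1 m)"
proof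
  define M where "M = [:-1::bit:] + monom 1 m"
  have dM: "degree M = m" unfolding M_def using degM[OF m] .
  then have M0: "M \<noteq> 0" using m by auto
  have evM: "evp e M (z::'f) = 0" for z unfolding M_def using evp_M[OF two] fr nem by simp
  assume inj: "\<forall>z::'f. evp e P z = 0 \<longrightarrow> z = 0"
  show "coprime P ([:-1:] + monom 1 m)"
  proof (rule ccontr)
    assume "\<not> coprime P ([:-1:] + monom 1 m)"
    then obtain c where c: "c dvd P" "c dvd M" "\<not> is_unit c" unfolding coprime_def M_def by blast
    obtain r where r: "M = c * r" using c(2) by (elim dvdE)
    obtain s where s: "P = c * s" using c(1) by (elim dvdE)
    have c0: "c \<noteq> 0" "r \<noteq> 0" using r M0 by auto
    have "degree c \<noteq> 0" using c(3) is_unit_iff_degree[OF c0(1)] by simp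
    then have dr: "degree r < m" using degree_mult_eq[OF c0] r dM by simp
    define A where "A j = (if coeff r j = 0 then 0 else (1::'f))" for j
    have "A (degree r) \<noteq> 0" unfolding A_def using c0(2) by simp
    moreover have "2^(e * degree r) < card (UNIV::'f set)"
    proof -
      have "e * degree r < e * m" using dr e by simp
      then show ?thesis unfolding card nem by simp
    qed
    ultimately obtain y0 :: 'f where y0: "(\<Sum>j\<le>degree r. A j * y0^(2^(e*j))) \<noteq> 0"
      using nonroot[of A "degree r" e] e by blast
    define w where "w = evp e r y0"
    have Aj: "A j * y = (if coeff r j = 0 then 0 else y)" for j y by (simp add: A_def)
    have "w \<noteq> 0" unfolding w_def evp_def using y0 by (simp only: Aj not_False_eq_True)
    moreover have "evp e c w = 0" unfolding w_def using evM[of y0] r evp_mult[OF two, of e c r y0] by simp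
    then have "evp e P w = 0" unfolding s mult.commute[of c s] evp_mult[OF two] by (simp add: evp_arg0)
    ultimately show False using inj by blast
  qed
next
  define M where "M = [:-1::bit:] + monom 1 m"
  have dM: "degree M = m" unfolding M_def using degM[OF m] .
  then have M0: "M \<noteq> 0" using m by auto
  have evM: "evp e M (z::'f) = 0" for z unfolding M_def using evp_M[OF two] fr nem by simp
  assume cop: "coprime P ([:-1:] + monom 1 m)"
  show "\<forall>z::'f. evp e P z = 0 \<longrightarrow> z = 0"
  proof (intro allI impI, rule ccontr)
    fix w :: 'f assume wP: "evp e P w = 0" and w0: "w \<noteq> 0"
    define I where "I = {f. evp e f w = 0 \<and> f \<noteq> 0}"
    have "M \<in> I" unfolding I_def using evM M0 by simp
    then obtain g where g: "g \<in> I" and gmin: "\<And>f. f \<in> I \<Longrightarrow> degree g \<le> degree f"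
      using ex_has_least_nat[of "\<lambda>f. f \<in> I" M degree] by blast
    have g0: "g \<noteq> 0" and evg: "evp e g w = 0" using g unfolding I_def by auto
    have gdvd: "g dvd f" if "evp e f w = 0" for f
    proof -
      have "evp e f w = evp e (f div g * g) w + evp e (f mod g) w"
        using div_mult_mod_eq[of f g] evp_add[OF two, of e "f div g * g" "f mod g" w] by simp
      then have ev: "evp e (f mod g) w = 0"
        using that evg by (simp add: evp_mult[OF two] evp_arg0)
      have "f mod g = 0"
      proof (rule ccontr)
        assume "f mod g \<noteq> 0"
        then have "f mod g \<in> I" using ev unfolding I_def by simp
        then show False using gmin degree_mod_less'[OF g0 \<open>f mod g \<noteq> 0\<close>] by fastforce
      qed
      then show ?thesis by (simp add: dvd_eq_mod_eq_0)
    qed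
    have "is_unit g" using cop gdvd[OF wP] gdvd[OF evM] unfolding coprime_def M_def by blast
    then have "degree g = 0" using is_unit_iff_degree[OF g0] by simp
    then obtain a where a: "g = [:a:]" by (metis degree_eq_zeroE)
    then have "a \<noteq> 0" using g0 by simp
    then have "a = 1" using bit01[of a] by simp
    then have "g = 1" using a by (simp add: one_pCons)
    then show False using evg w0 by (simp add: evp_const1)
  qed
qed

lemma evp_if: "evp e (if b then p else q) z = (if b then evp e p z else evp e q z)" by simp

lemma evp_P: assumes two: "(2::'f::field) = 0"
  shows "evp e (pcompose (cpoly m c) (monom 1 k)) (z::'f) =
     z + (\<Sum>i\<in>{1..(m - 1) div 2}. if c i then z^(2^(e*(k*i))) + z^(2^(e*(k*(m-i)))) else 0)"
proof -
  have "pcompose (cpoly m c) (monom 1 k) =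
     1 + (\<Sum>i\<in>{1..(m - 1) div 2}. if c i then monom 1 (k*i) + monom 1 (k*(m-i)) else 0)"
    unfolding cpoly_def pcompose_add pcompose_1 pcompose_sum
    by (rule arg_cong2[where f="(+)"], simp, rule sum.cong)
       (auto simp: pcompose_add pcompose_monom1 monom_power mult.commute)
  then show ?thesis
    by (simp add: evp_add[OF two] evp_sum[OF two] evp_const1 evp_if evp_monom1 cong: if_cong)
qed



definition bi :: "'f::field \<Rightarrow> int" where "bi v = (if v = 0 then 0 else 1)"

locale grsetup =
  fixes \<mu> :: "'r::{comm_ring_1,finite} \<Rightarrow> 'f::{field,finite}" and n :: nat
  assumes four: "(4::'r) = 0" and two_ne: "(2::'r) \<noteq> 0"
    and units: "\<And>z::'r. (\<nexists>y. z = 2*y) \<Longrightarrow> \<exists>w. z*w = 1"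
    and hom1: "\<mu> 1 = 1" and hadd: "\<And>x y. \<mu> (x + y) = \<mu> x + \<mu> y"
    and hmul: "\<And>x y. \<mu> (x * y) = \<mu> x * \<mu> y"
    and surj: "surj \<mu>" and card: "card (UNIV::'f set) = 2^n" and n1: "n \<ge> 1"
begin

lemma h0 [simp]: "\<mu> 0 = 0"
proof -
  have "\<mu> 0 + \<mu> 0 = \<mu> 0 + 0" using hadd[of 0 0] by simp
  then show ?thesis by (rule add_left_imp_eq)
qed

lemma hneg: "\<mu> (- x) = - \<mu> x"
proof -
  have "\<mu> x + \<mu> (-x) = 0" using hadd[of x "-x"] by simp
  then show ?thesis by (metis add.commute eq_neg_iff_add_eq_0)
qed

lemma hdiff: "\<mu> (x - y) = \<mu> x - \<mu> y"
  using hadd[of x "-y"] hneg[of y] by simp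

lemma hpow: "\<mu> (x ^ j) = \<mu> x ^ j"
  by (induction j) (simp_all add: hom1 hmul)

lemma hsum: "\<mu> (\<Sum>i\<in>A. f i) = (\<Sum>i\<in>A. \<mu> (f i))"
  by (induction A rule: infinite_finite_induct) (simp_all add: hadd)

lemma h2: "\<mu> 2 = (2::'f)"
  using hadd[of 1 1] hom1 by simp

lemma twoF: "(2::'f) = 0"
proof -
  have a: "\<mu> ((2::'r) * 2) = 0" using four by simp
  have "\<mu> ((2::'r) * 2) = (2::'f) * 2" by (simp only: hmul h2)
  then have "(2::'f) * 2 = 0" using a by simp
  then show ?thesis by (simp only: mult_eq_0_iff disj_absorb)
qed

lemma frF: "(y::'f)^(2^n) = y"
  using fermat_ff[of y] card by simp

lemma ker: "\<mu> z = 0 \<longleftrightarrow> (\<exists>y. z = 2*y)"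
proof
  assume z: "\<mu> z = 0"
  show "\<exists>y. z = 2*y"
  proof (rule ccontr)
    assume "\<nexists>y. z = 2*y"
    then obtain w where "z * w = 1" using units by blast
    then have "\<mu> z * \<mu> w = 1" using hmul[of z w] hom1 by simp
    then show False using z by simp
  qed
next
  assume "\<exists>y. z = 2*y"
  then show "\<mu> z = 0" using hmul h2 twoF by auto
qed

lemma ann2: assumes "2 * a = (0::'r)" shows "\<mu> a = 0"
proof (rule ccontr)
  assume "\<mu> a \<noteq> 0"
  then have "\<nexists>y. a = 2*y" using ker by blast
  then obtain w where "a * w = 1" using units by blast
  then have "2 = 2 * a * w" by (simp add: mult.assoc)
  then show False using assms two_ne by simp
qed

lemma eq2: assumes "\<mu> a = \<mu> b" shows "2 * a = 2 * (b::'r)"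
proof -
  have "\<mu> (a - b) = 0" using assms by (simp add: hdiff)
  then obtain y where "a - b = 2 * y" using ker by blast
  then have "2 * (a - b) = 4 * y" by simp
  then show ?thesis using four by (simp add: algebra_simps)
qed

lemma eq2_iff: "2 * a = 2 * (b::'r) \<longleftrightarrow> \<mu> a = \<mu> b"
proof
  assume "2 * a = 2 * b"
  then have "2 * (a - b) = 0" by (simp add: algebra_simps)
  then have "\<mu> (a - b) = 0" by (rule ann2)
  then show "\<mu> a = \<mu> b" by (simp add: hdiff)
qed (rule eq2)

lemma sq_eq: assumes "\<mu> a = \<mu> b" shows "a^2 = (b::'r)^2"
proof -
  have "\<mu> (a - b) = 0" using assms by (simp add: hdiff)
  then obtain y where "a - b = 2 * y" using ker by blast
  then have y: "a = b + 2 * y" by (simp add: algebra_simps)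
  have "a^2 = b^2 + 4 * (b * y + y * y)" unfolding y by (simp add: power2_eq_square algebra_simps)
  then show ?thesis using four by simp
qed

abbreviation "T \<equiv> (teich n :: 'r set)"

lemma teich_pow: assumes "x \<in> T" shows "(x::'r)^(2^n) = x"
  using assms unfolding teich_def by simp

lemma sq_pow: "(x::'r)^(2^n) = (x^2)^(2^(n-1))"
proof -
  have "(2::nat)^n = 2 * 2^(n-1)" using n1 by (cases n) auto
  then show ?thesis by (simp add: power_mult)
qed

lemma tlift: "(z::'r)^(2^n) \<in> T" "\<mu> (z^(2^n)) = \<mu> z"
proof -
  show mz: "\<mu> (z^(2^n)) = \<mu> z" using hpow frF by simp
  define a where "a = z^(2^n)"
  have "a^2 = z^2" using sq_eq mz unfolding a_def by blast
  then have "a^(2^n) = (z^2)^(2^(n-1))" using sq_pow[of a] by simp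
  also have "\<dots> = a" unfolding a_def using sq_pow[of z] by simp
  finally have "a^(2^n) = a" .
  then show "z^(2^n) \<in> T" unfolding a_def teich_def by simp
qed

lemma T_inj: assumes "x \<in> T" "y \<in> T" "\<mu> x = \<mu> y" shows "x = y"
proof -
  have "x^2 = y^2" using sq_eq assms(3) .
  have "x = (x^2)^(2^(n-1))" using teich_pow[OF assms(1)] sq_pow[of x] by simp
  also have "\<dots> = (y^2)^(2^(n-1))" using \<open>x^2 = y^2\<close> by simp
  also have "\<dots> = y" using teich_pow[OF assms(2)] sq_pow[of y] by simp
  finally show ?thesis .
qed

lemma T_mult: "x \<in> T \<Longrightarrow> y \<in> T \<Longrightarrow> x * y \<in> T"
  unfolding teich_def by (simp add: power_mult_distrib)

lemma T_0: "0 \<in> T"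
proof -
  have "(0::'r)^(2^n) = 0" by (intro zero_power) simp
  then show ?thesis unfolding teich_def by simp
qed

lemma T_img: "\<mu> ` T = UNIV"
proof -
  have "y \<in> \<mu> ` T" for y
  proof -
    obtain z where "y = \<mu> z" using surj by (metis surjD)
    then show ?thesis using tlift[of z] by (metis image_eqI)
  qed
  then show ?thesis by auto
qed

definition L where "L y = inv_into T \<mu> y"

lemma L: "L y \<in> T" "\<mu> (L y) = y"
  unfolding L_def using T_img by (auto intro: inv_into_into f_inv_into_f)

lemma decomp_unique:
  assumes "x \<in> T" "y \<in> T" "x' \<in> T" "y' \<in> T" "x + 2*y = x' + 2*(y'::'r)"
  shows "x = x' \<and> y = y'"
proof -
  have "\<mu> (2*y) = 0" "\<mu> (2*y') = 0" using ker by auto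
  then have "\<mu> x = \<mu> x'" using arg_cong[OF assms(5), of \<mu>] by (simp add: hadd)
  then have xx: "x = x'" using T_inj assms by blast
  then have "2*y = 2*y'" using assms(5) by simp
  then have "\<mu> y = \<mu> y'" using eq2_iff by blast
  then show ?thesis using xx T_inj assms by blast
qed

lemma txty: assumes "x \<in> T" "y \<in> T"
  shows "tx n (x + 2*y) = x" "ty n (x + 2*y) = (y::'r)"
proof -
  show t1: "tx n (x + 2*y) = x" unfolding tx_def
    by (rule the_equality) (use assms in blast, use assms decomp_unique in metis)
  show "ty n (x + 2*y) = y" unfolding ty_def t1
    by (rule the_equality) (use assms in blast, use assms decomp_unique in metis)
qed

lemma of01: assumes "(v::'f)^2 = v" shows "\<mu> (of_int (bi v)) = v"
  using sq01[OF assms] unfolding bi_def by (auto simp: hom1)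

lemma tr_val: assumes a: "a \<in> T"
  shows "(\<Sum>j<n. a^(2^j)) = of_int (bi (ftr n (\<mu> a)) + 2 * bi (e2f n (\<mu> a)))"
proof -
  define u where "u j = a^(2^j)" for j
  define s where "s = (\<Sum>j<n. u j)"
  define P where "P = (\<Sum>j<n. \<Sum>i<j. u i * u j)"
  have un: "u n = u 0" unfolding u_def using teich_pow[OF a] by simp
  have "(\<Sum>j<n. (u j)^2) = (\<Sum>j<n. u (Suc j))"
    unfolding u_def by (simp add: power_mult[symmetric] mult.commute)
  also have "\<dots> = s" unfolding s_def using shift_sum[of u n] un by simp
  finally have ss: "s^2 = s + 2*P" unfolding P_def using sq_sum_gen[of u n] s_def by simp
  define t where "t = ftr n (\<mu> a)"
  have t2: "t^2 = t" unfolding t_def using tr_sq[OF twoF frF] .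
  have ms: "\<mu> s = t" unfolding s_def t_def u_def ftr_def by (simp add: hsum hpow)
  define k where "k = bi t"
  have k01: "k = 0 \<or> k = 1" unfolding k_def bi_def by auto
  have "\<mu> s = \<mu> (of_int k)" unfolding k_def using of01[OF t2] ms by simp
  then have "s^2 = (of_int k)^2" by (rule sq_eq)
  also have "\<dots> = of_int k" using k01 by auto
  finally have "of_int k = s + 2*P" using ss by simp
  then have s1: "s = of_int k - 2*P" by (simp add: algebra_simps)
  have "2*P + 2*P = 4*P" by simp
  then have "- (2*P) = 2*P" using four by (simp add: eq_neg_iff_add_eq_0)
  then have s2: "s = of_int k + 2*P" using s1 by simp
  define q where "q = e2f n (\<mu> a)"
  have q2: "q^2 = q" unfolding q_def using e2_sq[OF twoF frF] .
  have mP: "\<mu> P = q" unfolding P_def q_def u_def e2f_def by (simp add: hsum hpow hmul)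
  have "2 * P = 2 * of_int (bi q)" using eq2 of01[OF q2] mP by simp
  then have "s = of_int (k + 2 * bi q)" using s2 by simp
  then show ?thesis unfolding s_def u_def k_def t_def q_def .
qed

lemma GTr_val: assumes a: "a \<in> T"
  shows "GTr n (a + 2*S) = of_int (bi (ftr n (\<mu> a)) + 2*bi (e2f n (\<mu> a)) + 2*bi (ftr n (\<mu> S)))"
proof -
  define y where "y = S^(2^n)"
  have yT: "y \<in> T" and my: "\<mu> y = \<mu> S" unfolding y_def using tlift by auto
  have "2*y = 2*S" using eq2[OF my] .
  then have z: "a + 2*S = a + 2*y" by simp
  have "GTr n (a + 2*S) = (\<Sum>j<n. a^(2^j)) + 2 * (\<Sum>j<n. y^(2^j))"
    unfolding z GTr_def txty[OF a yT] by (simp add: sum.distrib sum_distrib_left)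
  moreover have "2 * (\<Sum>j<n. y^(2^j)) = 2 * of_int (bi (ftr n (\<mu> S)))"
  proof (rule eq2)
    have "\<mu> (\<Sum>j<n. y^(2^j)) = ftr n (\<mu> S)" unfolding ftr_def my[symmetric] by (simp add: hsum hpow)
    then show "\<mu> (\<Sum>j<n. y^(2^j)) = \<mu> (of_int (bi (ftr n (\<mu> S))))"
      using of01[OF tr_sq[OF twoF frF]] by simp
  qed
  ultimately show ?thesis using tr_val[OF a] by simp
qed

lemma one_ne: "(1::'r) \<noteq> 0"
proof
  assume h: "(1::'r) = 0"
  have "(2::'r) = 1 + 1" by simp
  then show False using h two_ne by simp
qed

lemma three_ne: "(3::'r) \<noteq> 0"
proof
  assume "(3::'r) = 0"
  moreover have "(4::'r) = 3 + 1" by simp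
  ultimately have "(4::'r) = 1" by simp
  then show False using four one_ne by simp
qed

lemma ofint_nz: assumes "d \<in> {-3..3}" "d \<noteq> 0" shows "(of_int d :: 'r) \<noteq> 0"
proof -
  have "d \<in> {-3,-2,-1,1,2,3}" using assms by auto
  then show ?thesis using one_ne two_ne three_ne by auto
qed

lemma z4aux: "(of_int j :: 'r) = of_int (j mod 4)"
proof -
  have "(of_int j::'r) = of_int (4 * (j div 4) + j mod 4)" by (metis mult_div_mod_eq)
  also have "\<dots> = 4 * of_int (j div 4) + of_int (j mod 4)" by (simp only: of_int_add of_int_mult of_int_numeral)
  also have "\<dots> = of_int (j mod 4)" using four by simp
  finally show ?thesis .
qed

lemma z4: "z4_val (of_int j :: 'r) = j mod 4"
  unfolding z4_val_def
proof (rule the_equality)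
  have "(of_int j :: 'r) = of_int (j mod 4)" by (rule z4aux)
  then show "j mod 4 \<in> {0..3} \<and> of_int (j mod 4) = (of_int j :: 'r)" by auto
next
  fix k assume k: "k \<in> {0..3} \<and> of_int k = (of_int j :: 'r)"
  have "(of_int j :: 'r) = of_int (j mod 4)" by (rule z4aux)
  then have "(of_int (k - j mod 4) :: 'r) = 0" using k by simp
  moreover have "k - j mod 4 \<in> {-3..3}" using k by auto
  ultimately show "k = j mod 4" using ofint_nz by fastforce
qed

end

lemma ipow: "\<i> ^ nat ((bi a + 2 * bi b + 2 * bi c) mod 4) = (if a = 0 then 1 else \<i>) * sgc b * sgc (c::'f::field)"
  unfolding bi_def sgc_def by (auto simp: power3_eq_cube)



lemma ftr_sum: assumes two: "(2::'f::field) = 0"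
  shows "ftr n (\<Sum>i\<in>A. f i) = (\<Sum>i\<in>A. ftr n (f i :: 'f))"
  by (induction A rule: infinite_finite_induct) (simp_all add: tr_zero tr_add[OF two])

lemma pow_e_fix: assumes "(b::'a::comm_ring_1)^(2^e) = b" shows "b^(2^(e*j)) = b"
proof (induction j)
  case 0 then show ?case by simp
next
  case (Suc j)
  have "b^(2^(e*Suc j)) = (b^(2^(e*j)))^(2^e)"
    by (simp add: power_mult[symmetric] power_add[symmetric] algebra_simps)
  then show ?case using Suc assms by simp
qed

lemma ftr_swap:
  assumes fr: "\<And>z::'f::field. z^(2^n) = z" and b: "(b::'f)^(2^e) = b" and nem: "n = e*m" and i: "i \<le> m"
  shows "ftr n (b * z * x^(2^(e*k*i))) = ftr n (b * x * z^(2^(e*k*(m-i))))"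
proof -
  define r where "r = e*k*(m-i)"
  define t where "t = e*k*i"
  have im: "i + (m-i) = m" using i by simp
  have "t + r = e*k*(i + (m-i))" unfolding t_def r_def by (simp only: add_mult_distrib2)
  then have tr: "t + r = k * n" unfolding im nem by simp
  have xx: "x^(2^(t + r)) = x" unfolding tr using pow2_mod[OF fr, where a="k*n"] by simp
  have br: "b^(2^r) = b" unfolding r_def using pow_e_fix[OF b, of "k*(m-i)"] by (simp add: mult.assoc)
  have "ftr n (b * z * x^(2^t)) = ftr n ((b * z * x^(2^t))^(2^r))"
    using tr_pow[OF fr fr] by simp
  also have "(b * z * x^(2^t))^(2^r) = b^(2^r) * z^(2^r) * x^(2^(t+r))"
    by (simp add: power_mult_distrib power_mult[symmetric] power_add)
  also have "\<dots> = b * x * z^(2^r)" using xx br by (simp add: algebra_simps)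
  finally show ?thesis unfolding r_def t_def .
qed

theorem theorem3:
  fixes \<mu> :: "'r::{comm_ring_1,finite} \<Rightarrow> 'f::{field,finite}"
    and n e m k :: nat and c :: "nat \<Rightarrow> bool" and \<alpha> \<beta> :: 'r
  assumes GR: "is_GR4 n TYPE('r)"
    and F: "card (UNIV::'f set) = 2 ^ n"
    and hom: "\<mu> 1 = 1" "\<And>x y. \<mu> (x + y) = \<mu> x + \<mu> y" "\<And>x y. \<mu> (x * y) = \<mu> x * \<mu> y"
    and surj: "surj \<mu>"
    and nem: "n = e * m" and "e \<ge> 1" "m \<ge> 1" and "k \<ge> 1"
    and \<alpha>: "\<alpha> \<in> teich_star n e" and \<beta>: "\<beta> \<in> teich_star n e" and "\<beta> = \<alpha> ^ 2"
  shows "quaternary_bent n (\<lambda>y. Qfun n e m k c \<alpha> \<beta> (inv_into (teich n) \<mu> y))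
     \<longleftrightarrow> coprime (pcompose (cpoly m c) (monom 1 k)) ([:-1:] + monom 1 m)"
proof -
  have e1: "e \<ge> 1" and m1: "m \<ge> 1" by fact+
  from GR have four: "(4::'r) = 0" and two_ne: "(2::'r) \<noteq> 0"
    and units: "\<And>z::'r. (\<nexists>y. z = 2*y) \<Longrightarrow> \<exists>w. z*w = 1"
    unfolding is_GR4_def by auto
  have n1: "n \<ge> 1" using nem e1 m1 by simp
  interpret G: grsetup \<mu> n
    using four two_ne units hom surj F n1 by unfold_locales auto
  note two = G.twoF and fr = G.frF
  have \<alpha>T: "\<alpha> \<in> teich n" "\<alpha> \<noteq> 0" using \<alpha> unfolding teich_star_def by auto
  have \<beta>T: "\<beta> \<in> teich n" "\<beta>^(2^e) = \<beta>" "\<beta> \<noteq> 0" using \<beta> unfolding teich_star_def by auto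
  define a0 where "a0 = \<mu> \<alpha>"
  define b0 where "b0 = \<mu> \<beta>"
  have b0a: "b0 = a0^2" unfolding a0_def b0_def using \<open>\<beta> = \<alpha>^2\<close> G.hpow by simp
  have b0e: "b0^(2^e) = b0" unfolding b0_def using \<beta>T(2) G.hpow by metis
  have b0nz: "b0 \<noteq> 0"
  proof
    assume "b0 = 0"
    then have "\<mu> \<beta> = \<mu> 0" unfolding b0_def by simp
    then have "\<beta> = 0" using G.T_inj[OF \<beta>T(1) G.T_0] by simp
    then show False using \<beta>T(3) by simp
  qed
  define I where "I = {1..(m - 1) div 2}"
  define hF where "hF y = (\<Sum>i\<in>I. (if c i then 1 else 0) * b0 * y^(1 + 2^(e*k*i)))" for y
  define Fv where "Fv y = gq n (a0 * y) * sgc (ftr n (hF y))" for y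
  define P where "P = pcompose (cpoly m c) (monom 1 k)"
  define D where "D z = b0 * evp e P z" for z
  have muif: "\<mu> (if b then 1 else 0) = (if b then 1 else 0)" for b by (simp add: G.hom1)
  have Q: "\<i> ^ nat (Qfun n e m k c \<alpha> \<beta> (inv_into (teich n) \<mu> y) mod 4) = Fv y" for y
  proof -
    define x where "x = inv_into (teich n) \<mu> y"
    have xT: "x \<in> teich n" "\<mu> x = y" using G.L unfolding G.L_def x_def by auto
    define S where "S = (\<Sum>i\<in>{1..(m - 1) div 2}. (if c i then 1 else 0) * \<beta> * x^(1 + 2^(e*k*i)))"
    have aT: "\<alpha> * x \<in> teich n" using G.T_mult \<alpha>T(1) xT(1) by blast
    have muS: "\<mu> S = hF y" unfolding S_def hF_def I_def
      by (simp add: G.hsum G.hmul G.hpow muif xT b0_def)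
    have "Qfun n e m k c \<alpha> \<beta> x =
       (bi (ftr n (\<mu> (\<alpha>*x))) + 2*bi (e2f n (\<mu> (\<alpha>*x))) + 2*bi (ftr n (\<mu> S))) mod 4"
      unfolding Qfun_def S_def[symmetric] G.GTr_val[OF aT] G.z4 by simp
    then show ?thesis unfolding x_def[symmetric]
      by (simp add: ipow gq_def muS G.hmul a0_def xT mult.assoc Fv_def)
  qed
  have W: "walsh4 n (\<lambda>y. Qfun n e m k c \<alpha> \<beta> (inv_into (teich n) \<mu> y)) a
      = (\<Sum>x\<in>UNIV. Fv x * sgc (ftr n (a*x)))" for a
    unfolding walsh4_def Q sgc_def by simp
  have evP: "evp e P z = z + (\<Sum>i\<in>I. if c i then z^(2^(e*(k*i))) + z^(2^(e*(k*(m-i)))) else 0)" for z :: 'f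
    unfolding P_def I_def by (simp only: evp_P[OF two])
  have Fadd: "Fv (x + z) = Fv x * Fv z * sgc (ftr n (x * D z))" for x z
  proof -
    define Cr where "Cr = (\<Sum>i\<in>I. (if c i then 1 else 0) * b0 * (x * z^(2^(e*k*i)) + z * x^(2^(e*k*i))))"
    have pw: "(x+z)^(1 + 2^t) = x^(1+2^t) + z^(1+2^t) + (x * z^(2^t) + z * x^(2^t))" for t
    proof -
      have "(x+z)^(1 + 2^t) = (x+z) * (x^(2^t) + z^(2^t))" by (simp add: frobj[OF two])
      then show ?thesis by (simp add: algebra_simps)
    qed
    have h: "hF (x+z) = hF x + hF z + Cr"
    proof -
      have "hF (x+z) = (\<Sum>i\<in>I. (if c i then 1 else 0) * b0 * x^(1 + 2^(e*k*i))
          + (if c i then 1 else 0) * b0 * z^(1 + 2^(e*k*i))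
          + (if c i then 1 else 0) * b0 * (x * z^(2^(e*k*i)) + z * x^(2^(e*k*i))))"
        unfolding hF_def by (rule sum.cong[OF refl]) (simp only: pw distrib_left)
      then show ?thesis unfolding hF_def Cr_def by (simp add: sum.distrib)
    qed
    have trCr: "ftr n Cr = ftr n (x * (b0 * (evp e P z - z)))"
    proof -
      have A1: "x * (b0 * (evp e P z - z)) = (\<Sum>i\<in>I. (if c i then 1 else 0) * b0 * (x * z^(2^(e*k*i)) + x * z^(2^(e*k*(m-i)))))"
        unfolding evP by (simp add: sum_distrib_left) (rule sum.cong[OF refl], simp add: algebra_simps)
      have B: "ftr n ((if c i then 1 else 0) * b0 * (x * z^(2^(e*k*i)) + z * x^(2^(e*k*i))))
          = ftr n ((if c i then 1 else 0) * b0 * (x * z^(2^(e*k*i)) + x * z^(2^(e*k*(m-i)))))"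
        if iI: "i \<in> I" for i
      proof (cases "c i")
        case True
        have im: "i \<le> m" using iI unfolding I_def by auto
        have "ftr n (b0 * z * x^(2^(e*k*i))) = ftr n (b0 * x * z^(2^(e*k*(m-i))))"
          by (rule ftr_swap[OF fr b0e nem im])
        then show ?thesis using True by (simp add: distrib_left tr_add[OF two] mult.assoc mult.left_commute)
      qed simp
      show ?thesis unfolding Cr_def A1 ftr_sum[OF two] by (rule sum.cong[OF refl]) (rule B)
    qed
    have "sgc (ftr n (hF (x+z))) = sgc (ftr n (hF x)) * sgc (ftr n (hF z)) * sgc (ftr n Cr)"
      unfolding h by (simp add: sgc_tr_add[OF two fr])
    moreover have "gq n (a0 * (x + z)) = gq n (a0*x) * gq n (a0*z) * sgc (ftr n (a0*x * (a0*z)))"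
      unfolding distrib_left by (rule gq_add[OF two fr])
    moreover have "sgc (ftr n (x * D z)) = sgc (ftr n (a0*x * (a0*z))) * sgc (ftr n Cr)"
    proof -
      have "x * D z = a0*x * (a0*z) + x * (b0 * (evp e P z - z))"
        unfolding D_def b0a by (simp add: algebra_simps power2_eq_square)
      then show ?thesis unfolding trCr by (simp add: sgc_tr_add[OF two fr])
    qed
    ultimately show ?thesis unfolding Fv_def by (simp add: algebra_simps)
  qed
  have Fnorm: "cnj (Fv x) * Fv x = 1" for x
    unfolding Fv_def gq_def sgc_def by auto
  have z0: "(0::'f)^(2^j) = 0" for j by (intro zero_power) simp
  have F0: "Fv 0 = 1"
  proof -
    have "hF 0 = 0" unfolding hF_def by (simp add: power_add)
    moreover have "e2f n (0::'f) = 0" unfolding e2f_def by (simp add: z0)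
    ultimately show ?thesis unfolding Fv_def gq_def by (simp add: tr_zero sgc_def)
  qed
  have Dadd: "D (x + y) = D x + D y" for x y
    unfolding D_def by (simp add: evp_additive[OF two] distrib_left)
  have "quaternary_bent n (\<lambda>y. Qfun n e m k c \<alpha> \<beta> (inv_into (teich n) \<mu> y))
     \<longleftrightarrow> (\<forall>a. cmod (\<Sum>x\<in>UNIV. Fv x * sgc (ftr n (a*x))) = 2 powr (real n / 2))"
    unfolding quaternary_bent_def W ..
  also have "\<dots> \<longleftrightarrow> (\<forall>z. D z = 0 \<longrightarrow> z = 0)"
    by (rule bent_iff_F[OF two fr F n1 Fadd Fnorm F0 Dadd])
  also have "\<dots> \<longleftrightarrow> (\<forall>z::'f. evp e P z = 0 \<longrightarrow> z = 0)"
    unfolding D_def using b0nz by simp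
  also have "\<dots> \<longleftrightarrow> coprime P ([:-1:] + monom 1 m)"
    by (rule inj_iff_coprime[OF two fr F nem e1 m1])
  finally show ?thesis unfolding P_def .
qed


end
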